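(* Let $\mathcal{D}$ be a distribution over $\mathcal{X}\times\{0,1\}$, let $h:\mathcal{X}\to[0,1]$ be a hypothesis, and let $f_1,f_2:[0,1]\to\mathbb{R}$ be such that the loss is $\ell(h(x),y)=f_1(h(x))+y\,f_2(h(x))$, with $\mathbb{E}_x[f_1(h(x))]$ and $\mathbb{E}_x[f_2(h(x))]$ finite. Let $(x_1,y_1),\ldots,(x_k,y_k)$ be drawn i.i.d. from $\mathcal{D}$, let $\alpha=\frac1k\sum_{i=1}^k y_i$, and let $z=((x_1,\ldots,x_k),\alpha)$ be the corresponding bag. Let $p=\mathbb{E}[y]$ and define the bag-level loss $$\ell_b(h,z)=\mathbb{E}_x\big[f_1(h(x))+p\,f_2(h(x))\big]+(\alpha-p)\Big(\sum_{i=1}^k f_2(h(x_i))-k\,\mathbb{E}_x[f_2(h(x))]\Big).$$ Then $$\mathbb{E}_z[\ell_b(h,z)]=\mathbb{E}_{(x,y)\sim\mathcal{D}}[\ell(h(x),y)],\qquad \mathrm{Var}_z(\ell_b(h,z))\le \frac52\,\mathbb{E}_x\big[(f_2(h(x)))^2\big].$$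
   Context: Here $x$ denotes a random feature vector distributed as the $\mathcal{X}$-marginal of $\mathcal{D}$, and $(x,y)\sim\mathcal{D}$. Every loss depending on a binary label can be written in the form $f_1(h(x))+y f_2(h(x))$ with $f_1(a)=\ell(a,0)$, $f_2(a)=\ell(a,1)-\ell(a,0)$. *)

theory Defs
  imports "HOL-Probability.Probability"
begin

text \<open>Label y is encoded as a bool; its numeric value is of_bool y (0 or 1).
  A sample of k i.i.d. draws is a function s :: nat => ('a * bool) on {..<k},
  distributed according to PiM {..<k} (%_. D).\<close>

definition label_mean :: "('a \<times> bool) measure \<Rightarrow> real" where
  "label_mean D = (\<integral>w. of_bool (snd w) \<partial>D)"

definition bag_label :: "nat \<Rightarrow> (nat \<Rightarrow> 'a \<times> bool) \<Rightarrow> real" where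
  "bag_label k s = (\<Sum>i<k. of_bool (snd (s i))) / real k"

definition bag_loss ::
  "('a \<times> bool) measure \<Rightarrow> (real \<Rightarrow> real) \<Rightarrow> (real \<Rightarrow> real) \<Rightarrow> ('a \<Rightarrow> real)
    \<Rightarrow> nat \<Rightarrow> (nat \<Rightarrow> 'a \<times> bool) \<Rightarrow> real" where
  "bag_loss D f1 f2 h k s =
     (let p = label_mean D in
      (\<integral>w. f1 (h (fst w)) + p * f2 (h (fst w)) \<partial>D)
      + (bag_label k s - p) *
        ((\<Sum>i<k. f2 (h (fst (s i)))) - real k * (\<integral>w. f2 (h (fst w)) \<partial>D)))"

end

theory Submission imports Defs begin

lemma prodint:
  fixes D :: "'b measure" and F :: "'i \<Rightarrow> 'b \<Rightarrow> real"
  assumes D: "prob_space D" and fin: "finite I" and int: "\<And>m. m \<in> I \<Longrightarrow> integrable D (F m)"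
  shows "integrable (PiM I (\<lambda>_. D)) (\<lambda>s. \<Prod>m\<in>I. F m (s m))"
    and "(\<integral>s. (\<Prod>m\<in>I. F m (s m)) \<partial>PiM I (\<lambda>_. D)) = (\<Prod>m\<in>I. \<integral>w. F m w \<partial>D)"
proof -
  interpret product_prob_space "\<lambda>_. D" I
    using D by (simp add: product_prob_space_def product_prob_space_axioms_def product_sigma_finite_def prob_space_imp_sigma_finite)
  show "integrable (PiM I (\<lambda>_. D)) (\<lambda>s. \<Prod>m\<in>I. F m (s m))"
    by (rule product_integrable_prod[OF fin int])
  show "(\<integral>s. (\<Prod>m\<in>I. F m (s m)) \<partial>PiM I (\<lambda>_. D)) = (\<Prod>m\<in>I. \<integral>w. F m w \<partial>D)"
    by (rule product_integral_prod[OF fin int])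
qed

definition Vg :: "real \<Rightarrow> real \<Rightarrow> real \<Rightarrow> 'i \<Rightarrow> 'i \<Rightarrow> 'i \<Rightarrow> 'i \<Rightarrow> real" where
  "Vg x y z i i' j j' = (if i = i' \<and> j = j' \<and> i = j then x
     else if i = i' \<and> j = j' then y
     else if i = j \<and> i' = j' then z
     else if i = j' \<and> i' = j then z
     else 0)"

lemma count4:
  assumes fin: "finite I"
  shows "(\<Sum>i\<in>I. \<Sum>i'\<in>I. \<Sum>j\<in>I. \<Sum>j'\<in>I. Vg x y z i i' j j')
     = real (card I) * x + real (card I) * (real (card I) - 1) * (y + 2 * z)"
proof -
  let ?n = "real (card I)"
  have s1: "(\<Sum>j'\<in>I. Vg x y z i i' j j') = (if i = i' then (if i = j then x else y) else 0)
      + (if i = j \<and> i \<noteq> i' then z else 0) + (if i' = j \<and> i \<noteq> i' then z else 0)"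
    if "i \<in> I" "i' \<in> I" "j \<in> I" for i i' j
  proof -
    have "(\<Sum>j'\<in>I. Vg x y z i i' j j') = (\<Sum>j'\<in>I. (if j' = j then (if i = i' then (if i = j then x else y) else 0) else 0)
       + (if j' = i' then (if i = j \<and> i \<noteq> i' then z else 0) else 0)
       + (if j' = i then (if i' = j \<and> i \<noteq> i' then z else 0) else 0))"
      by (rule sum.cong[OF refl]) (cases "i = i'"; cases "i = j"; cases "i' = j"; simp add: Vg_def)
    also have "\<dots> = (if i = i' then (if i = j then x else y) else 0)
      + (if i = j \<and> i \<noteq> i' then z else 0) + (if i' = j \<and> i \<noteq> i' then z else 0)"
      using fin that by (simp add: sum.distrib)
    finally show ?thesis .
  qed
  have s2: "(\<Sum>j\<in>I. \<Sum>j'\<in>I. Vg x y z i i' j j') = (if i = i' then x + (?n - 1) * y else 0)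
      + (if i \<noteq> i' then 2 * z else 0)"
    if "i \<in> I" "i' \<in> I" for i i'
  proof -
    have "(\<Sum>j\<in>I. \<Sum>j'\<in>I. Vg x y z i i' j j') = (\<Sum>j\<in>I. (if i = i' then y else 0)
       + (if j = i then (if i = i' then x - y else 0) else 0)
       + (if j = i then (if i \<noteq> i' then z else 0) else 0)
       + (if j = i' then (if i \<noteq> i' then z else 0) else 0))"
      by (rule sum.cong) (auto simp: s1 that)
    also have "\<dots> = (if i = i' then x + (?n - 1) * y else 0) + (if i \<noteq> i' then 2 * z else 0)"
      using fin that by (simp add: sum.distrib algebra_simps)
    finally show ?thesis .
  qed
  have s3: "(\<Sum>i'\<in>I. \<Sum>j\<in>I. \<Sum>j'\<in>I. Vg x y z i i' j j') = x + (?n - 1) * (y + 2 * z)"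
    if "i \<in> I" for i
  proof -
    have "(\<Sum>i'\<in>I. \<Sum>j\<in>I. \<Sum>j'\<in>I. Vg x y z i i' j j') = (\<Sum>i'\<in>I. 2 * z
       + (if i' = i then x + (?n - 1) * y - 2 * z else 0))"
      by (rule sum.cong) (auto simp: s2 that)
    also have "\<dots> = x + (?n - 1) * (y + 2 * z)"
      using fin that by (simp add: sum.distrib algebra_simps)
    finally show ?thesis .
  qed
  have "(\<Sum>i\<in>I. \<Sum>i'\<in>I. \<Sum>j\<in>I. \<Sum>j'\<in>I. Vg x y z i i' j j') = (\<Sum>i\<in>I. x + (?n - 1) * (y + 2 * z))"
    by (rule sum.cong) (auto simp: s3)
  also have "\<dots> = ?n * x + ?n * (?n - 1) * (y + 2 * z)"
    by (simp add: algebra_simps)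
  finally show ?thesis .
qed

context
  fixes D :: "'b measure" and a b :: "'b \<Rightarrow> real"
  assumes D: "prob_space D"
    and am: "a \<in> borel_measurable D" and bm: "b \<in> borel_measurable D"
    and abound: "\<And>w. w \<in> space D \<Longrightarrow> \<bar>a w\<bar> \<le> 1"
    and bint: "integrable D b"
    and a0: "integral\<^sup>L D a = 0" and b0: "integral\<^sup>L D b = 0"
begin

lemma aint: "integrable D a"
proof -
  interpret prob_space D by (rule D)
  show ?thesis
    by (rule Bochner_Integration.integrable_bound[of _ "\<lambda>_. 1::real"]) (auto simp: am abound)
qed

lemma Fint2:
  "integrable D (\<lambda>w. (if m = i then a w else 1) * (if m = j then b w else 1))"
proof -
  interpret prob_space D by (rule D)
  show ?thesis
  proof (rule Bochner_Integration.integrable_bound[of _ "\<lambda>w. 1 + \<bar>b w\<bar>"])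
    show "integrable D (\<lambda>w. 1 + \<bar>b w\<bar>)" using bint by auto
    show "(\<lambda>w. (if m = i then a w else 1) * (if m = j then b w else 1)) \<in> borel_measurable D"
      using am bm by measurable
    show "AE w in D. norm ((if m = i then a w else 1) * (if m = j then b w else 1)) \<le> norm (1 + \<bar>b w\<bar>)"
    proof (rule AE_I2)
      fix w assume w: "w \<in> space D"
      have "\<bar>if m = i then a w else 1\<bar> \<le> 1" using abound[OF w] by auto
      moreover have "\<bar>if m = j then b w else 1\<bar> \<le> 1 + \<bar>b w\<bar>" by auto
      ultimately have "\<bar>(if m = i then a w else 1) * (if m = j then b w else 1)\<bar> \<le> 1 * (1 + \<bar>b w\<bar>)"
        unfolding abs_mult by (intro mult_mono) auto
      then show "norm ((if m = i then a w else 1) * (if m = j then b w else 1)) \<le> norm (1 + \<bar>b w\<bar>)"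
        by simp
    qed
  qed
qed

lemma term2:
  assumes fin: "finite I" and i: "i \<in> I" and j: "j \<in> I"
  shows "integrable (PiM I (\<lambda>_. D)) (\<lambda>s. a (s i) * b (s j))"
    and "(\<integral>s. a (s i) * b (s j) \<partial>PiM I (\<lambda>_. D)) = (if i = j then (\<integral>w. a w * b w \<partial>D) else 0)"
proof -
  interpret prob_space D by (rule D)
  define F where "F m w = (if m = i then a w else 1) * (if m = j then b w else 1)" for m w
  have eq: "(\<lambda>s. a (s i) * b (s j)) = (\<lambda>s. \<Prod>m\<in>I. F m (s m))"
    using fin i j by (simp add: F_def prod.distrib)
  have Fi: "\<And>m. m \<in> I \<Longrightarrow> integrable D (F m)" unfolding F_def by (rule Fint2)
  show "integrable (PiM I (\<lambda>_. D)) (\<lambda>s. a (s i) * b (s j))"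
    unfolding eq by (rule prodint(1)[OF D fin Fi])
  have "(\<integral>s. a (s i) * b (s j) \<partial>PiM I (\<lambda>_. D)) = (\<Prod>m\<in>I. \<integral>w. F m w \<partial>D)"
    unfolding eq by (rule prodint(2)[OF D fin Fi])
  also have "\<dots> = (\<Prod>m\<in>{i,j}. \<integral>w. F m w \<partial>D)"
    using fin i j by (intro prod.mono_neutral_right) (auto simp: F_def prob_space.prob_space[OF D])
  also have "\<dots> = (if i = j then (\<integral>w. a w * b w \<partial>D) else 0)"
    by (cases "i = j") (auto simp: F_def a0 b0 prob_space.prob_space[OF D])
  finally show "(\<integral>s. a (s i) * b (s j) \<partial>PiM I (\<lambda>_. D)) = (if i = j then (\<integral>w. a w * b w \<partial>D) else 0)" .
qed


lemma abs_le_1_sq: "\<bar>x::real\<bar> \<le> 1 + x^2"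
proof (cases "\<bar>x\<bar> \<le> 1")
  case True then show ?thesis by (simp add: add_increasing2)
next
  case False
  then have "\<bar>x\<bar> * 1 \<le> \<bar>x\<bar> * \<bar>x\<bar>" by (intro mult_left_mono) auto
  then show ?thesis by (simp add: power2_eq_square abs_mult_self_eq)
qed

lemma Fint4:
  assumes b2: "integrable D (\<lambda>w. (b w)^2)"
  shows "integrable D (\<lambda>w. (if m = i then a w else 1) * (if m = i' then a w else 1)
     * (if m = j then b w else 1) * (if m = j' then b w else 1))"
proof -
  interpret prob_space D by (rule D)
  show ?thesis
  proof (rule Bochner_Integration.integrable_bound[of _ "\<lambda>w. 1 + (b w)^2"])
    show "integrable D (\<lambda>w. 1 + (b w)^2)" using b2 by auto
    show "(\<lambda>w. (if m = i then a w else 1) * (if m = i' then a w else 1)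
     * (if m = j then b w else 1) * (if m = j' then b w else 1)) \<in> borel_measurable D"
      using am bm by measurable
    show "AE w in D. norm ((if m = i then a w else 1) * (if m = i' then a w else 1)
     * (if m = j then b w else 1) * (if m = j' then b w else 1)) \<le> norm (1 + (b w)^2)"
    proof (rule AE_I2)
      fix w assume w: "w \<in> space D"
      have 1: "\<bar>(if m = i then a w else 1) * (if m = i' then a w else 1)\<bar> \<le> 1" using abound[OF w]
        by (auto simp: abs_mult mult_le_one)
      have 2: "\<bar>(if m = j then b w else 1) * (if m = j' then b w else 1)\<bar> \<le> 1 + (b w)^2"
        using abs_le_1_sq[of "b w"] by (auto simp: abs_mult power2_eq_square)
      have "\<bar>((if m = i then a w else 1) * (if m = i' then a w else 1))
         * ((if m = j then b w else 1) * (if m = j' then b w else 1))\<bar> \<le> 1 * (1 + (b w)^2)"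
        unfolding abs_mult[of "(if m = i then a w else 1) * (if m = i' then a w else 1)"]
        by (intro mult_mono 1 2) auto
      then show "norm ((if m = i then a w else 1) * (if m = i' then a w else 1)
     * (if m = j then b w else 1) * (if m = j' then b w else 1)) \<le> norm (1 + (b w)^2)"
        by (simp add: mult.assoc)
    qed
  qed
qed

abbreviation "V4 \<equiv> Vg (\<integral>w. a w * a w * b w * b w \<partial>D)
   ((\<integral>w. a w * a w \<partial>D) * (\<integral>w. b w * b w \<partial>D))
   ((\<integral>w. a w * b w \<partial>D) * (\<integral>w. a w * b w \<partial>D))"

lemma term4:
  assumes b2: "integrable D (\<lambda>w. (b w)^2)"
  assumes fin: "finite I" and i: "i \<in> I" and i': "i' \<in> I" and j: "j \<in> I" and j': "j' \<in> I"
  shows "integrable (PiM I (\<lambda>_. D)) (\<lambda>s. a (s i) * a (s i') * b (s j) * b (s j'))"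
    and "(\<integral>s. a (s i) * a (s i') * b (s j) * b (s j') \<partial>PiM I (\<lambda>_. D)) = V4 i i' j j'"
proof -
  interpret prob_space D by (rule D)
  define F where "F m w = (if m = i then a w else 1) * (if m = i' then a w else 1)
     * (if m = j then b w else 1) * (if m = j' then b w else 1)" for m w
  have eq: "(\<lambda>s. a (s i) * a (s i') * b (s j) * b (s j')) = (\<lambda>s. \<Prod>m\<in>I. F m (s m))"
    using fin i j i' j' by (simp add: F_def prod.distrib)
  have Fi: "\<And>m. m \<in> I \<Longrightarrow> integrable D (F m)" unfolding F_def by (rule Fint4[OF b2])
  show "integrable (PiM I (\<lambda>_. D)) (\<lambda>s. a (s i) * a (s i') * b (s j) * b (s j'))"
    unfolding eq by (rule prodint(1)[OF D fin Fi])
  have "(\<integral>s. a (s i) * a (s i') * b (s j) * b (s j') \<partial>PiM I (\<lambda>_. D)) = (\<Prod>m\<in>I. \<integral>w. F m w \<partial>D)"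
    unfolding eq by (rule prodint(2)[OF D fin Fi])
  also have "\<dots> = (\<Prod>m\<in>{i,i',j,j'}. \<integral>w. F m w \<partial>D)"
    using fin i j i' j' by (intro prod.mono_neutral_right) (auto simp: F_def prob_space.prob_space[OF D])
  also have "\<dots> = V4 i i' j j'"
    by (cases "i = i'"; cases "i = j"; cases "i = j'"; cases "i' = j"; cases "i' = j'"; cases "j = j'")
       (auto simp: F_def a0 b0 prob_space.prob_space[OF D] Vg_def insert_commute)
  finally show "(\<integral>s. a (s i) * a (s i') * b (s j) * b (s j') \<partial>PiM I (\<lambda>_. D)) = V4 i i' j j'" .
qed


lemma sum2:
  assumes fin: "finite I"
  shows "integrable (PiM I (\<lambda>_. D)) (\<lambda>s. (\<Sum>i\<in>I. a (s i)) * (\<Sum>j\<in>I. b (s j)))"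
    and "(\<integral>s. (\<Sum>i\<in>I. a (s i)) * (\<Sum>j\<in>I. b (s j)) \<partial>PiM I (\<lambda>_. D)) = real (card I) * (\<integral>w. a w * b w \<partial>D)"
proof -
  have eq: "(\<lambda>s. (\<Sum>i\<in>I. a (s i)) * (\<Sum>j\<in>I. b (s j))) = (\<lambda>s. \<Sum>i\<in>I. \<Sum>j\<in>I. a (s i) * b (s j))"
    by (simp add: sum_product)
  show "integrable (PiM I (\<lambda>_. D)) (\<lambda>s. (\<Sum>i\<in>I. a (s i)) * (\<Sum>j\<in>I. b (s j)))"
    unfolding eq by (intro Bochner_Integration.integrable_sum term2(1)[OF fin])
  have "(\<integral>s. (\<Sum>i\<in>I. a (s i)) * (\<Sum>j\<in>I. b (s j)) \<partial>PiM I (\<lambda>_. D))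
     = (\<Sum>i\<in>I. \<Sum>j\<in>I. (\<integral>s. a (s i) * b (s j) \<partial>PiM I (\<lambda>_. D)))"
    unfolding eq by (subst Bochner_Integration.integral_sum, intro Bochner_Integration.integrable_sum term2(1)[OF fin], assumption+,
       intro sum.cong refl Bochner_Integration.integral_sum term2(1)[OF fin])
  also have "\<dots> = (\<Sum>i\<in>I. \<Sum>j\<in>I. (if i = j then (\<integral>w. a w * b w \<partial>D) else 0))"
    by (intro sum.cong refl) (simp add: term2(2)[OF fin])
  also have "\<dots> = real (card I) * (\<integral>w. a w * b w \<partial>D)"
    using fin by simp
  finally show "(\<integral>s. (\<Sum>i\<in>I. a (s i)) * (\<Sum>j\<in>I. b (s j)) \<partial>PiM I (\<lambda>_. D)) = real (card I) * (\<integral>w. a w * b w \<partial>D)" .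
qed

lemma trans3: "x = y \<Longrightarrow> y = z \<Longrightarrow> z = w \<Longrightarrow> x = w" by simp

lemma int_sum4:
  fixes f :: "'i \<Rightarrow> 'i \<Rightarrow> 'i \<Rightarrow> 'i \<Rightarrow> 'x \<Rightarrow> real"
  assumes "\<And>i i' j j'. i \<in> I \<Longrightarrow> i' \<in> I \<Longrightarrow> j \<in> I \<Longrightarrow> j' \<in> I \<Longrightarrow> integrable M (f i i' j j')"
  shows "integral\<^sup>L M (\<lambda>s. \<Sum>i\<in>I. \<Sum>i'\<in>I. \<Sum>j\<in>I. \<Sum>j'\<in>I. f i i' j j' s)
    = (\<Sum>i\<in>I. \<Sum>i'\<in>I. \<Sum>j\<in>I. \<Sum>j'\<in>I. integral\<^sup>L M (f i i' j j'))"
  using assms by (simp add: Bochner_Integration.integral_sum Bochner_Integration.integrable_sum)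

lemma sum4:
  assumes b2: "integrable D (\<lambda>w. (b w)^2)"
  assumes fin: "finite I"
  shows "integrable (PiM I (\<lambda>_. D)) (\<lambda>s. (\<Sum>i\<in>I. a (s i))^2 * (\<Sum>j\<in>I. b (s j))^2)"
    and "(\<integral>s. (\<Sum>i\<in>I. a (s i))^2 * (\<Sum>j\<in>I. b (s j))^2 \<partial>PiM I (\<lambda>_. D))
      = real (card I) * (\<integral>w. a w * a w * b w * b w \<partial>D) + real (card I) * (real (card I) - 1) *
        ((\<integral>w. a w * a w \<partial>D) * (\<integral>w. b w * b w \<partial>D) + 2 * ((\<integral>w. a w * b w \<partial>D) * (\<integral>w. a w * b w \<partial>D)))"
proof -
  have eq: "(\<lambda>s. (\<Sum>i\<in>I. a (s i))^2 * (\<Sum>j\<in>I. b (s j))^2) =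
     (\<lambda>s. \<Sum>i\<in>I. \<Sum>i'\<in>I. \<Sum>j\<in>I. \<Sum>j'\<in>I. a (s i) * a (s i') * b (s j) * b (s j'))"
  proof
    fix s
    have 1: "(\<Sum>i\<in>I. a (s i))^2 = (\<Sum>i\<in>I. \<Sum>i'\<in>I. a (s i) * a (s i'))"
      by (simp add: power2_eq_square sum_product)
    have 2: "(\<Sum>j\<in>I. b (s j))^2 = (\<Sum>j\<in>I. \<Sum>j'\<in>I. b (s j) * b (s j'))"
      by (simp add: power2_eq_square sum_product)
    show "(\<Sum>i\<in>I. a (s i))^2 * (\<Sum>j\<in>I. b (s j))^2 =
     (\<Sum>i\<in>I. \<Sum>i'\<in>I. \<Sum>j\<in>I. \<Sum>j'\<in>I. a (s i) * a (s i') * b (s j) * b (s j'))"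
      unfolding 1 2 unfolding sum_distrib_right unfolding sum_distrib_left by (simp add: mult.assoc)
  qed
  show "integrable (PiM I (\<lambda>_. D)) (\<lambda>s. (\<Sum>i\<in>I. a (s i))^2 * (\<Sum>j\<in>I. b (s j))^2)"
    unfolding eq by (intro Bochner_Integration.integrable_sum term4(1)[OF b2 fin])
  have "(\<integral>s. (\<Sum>i\<in>I. a (s i))^2 * (\<Sum>j\<in>I. b (s j))^2 \<partial>PiM I (\<lambda>_. D))
     = (\<Sum>i\<in>I. \<Sum>i'\<in>I. \<Sum>j\<in>I. \<Sum>j'\<in>I. (\<integral>s. a (s i) * a (s i') * b (s j) * b (s j') \<partial>PiM I (\<lambda>_. D)))"
  proof -
    have C: "integral\<^sup>L (PiM I (\<lambda>_. D)) (\<lambda>s. (\<Sum>i\<in>I. a (s i))^2 * (\<Sum>j\<in>I. b (s j))^2)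
       = integral\<^sup>L (PiM I (\<lambda>_. D)) (\<lambda>s. \<Sum>i\<in>I. \<Sum>i'\<in>I. \<Sum>j\<in>I. \<Sum>j'\<in>I. a (s i) * a (s i') * b (s j) * b (s j'))"
      by (rule arg_cong[where f="integral\<^sup>L (PiM I (\<lambda>_. D))", OF eq])
    show ?thesis using C int_sum4[OF term4(1)[OF b2 fin]] by (rule trans)
  qed
  also have "\<dots> = (\<Sum>i\<in>I. \<Sum>i'\<in>I. \<Sum>j\<in>I. \<Sum>j'\<in>I. V4 i i' j j')"
    by (intro sum.cong refl) (simp add: term4(2)[OF b2 fin])
  also have "\<dots> = real (card I) * (\<integral>w. a w * a w * b w * b w \<partial>D) + real (card I) * (real (card I) - 1) *
        ((\<integral>w. a w * a w \<partial>D) * (\<integral>w. b w * b w \<partial>D) + 2 * ((\<integral>w. a w * b w \<partial>D) * (\<integral>w. a w * b w \<partial>D)))"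
    by (rule count4[OF fin])
  finally show "(\<integral>s. (\<Sum>i\<in>I. a (s i))^2 * (\<Sum>j\<in>I. b (s j))^2 \<partial>PiM I (\<lambda>_. D))
      = real (card I) * (\<integral>w. a w * a w * b w * b w \<partial>D) + real (card I) * (real (card I) - 1) *
        ((\<integral>w. a w * a w \<partial>D) * (\<integral>w. b w * b w \<partial>D) + 2 * ((\<integral>w. a w * b w \<partial>D) * (\<integral>w. a w * b w \<partial>D)))" .
qed

end

theorem lemma1:
  fixes X :: "'a measure" and D :: "('a \<times> bool) measure"
    and h :: "'a \<Rightarrow> real" and f1 f2 :: "real \<Rightarrow> real" and k :: nat
  assumes "prob_space D"
    and "sets D = sets (X \<Otimes>\<^sub>M count_space UNIV)"
    and "h \<in> borel_measurable X"
    and "\<And>x. x \<in> space X \<Longrightarrow> h x \<in> {0..1}"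
    and "integrable D (\<lambda>w. f1 (h (fst w)))"
    and "integrable D (\<lambda>w. f2 (h (fst w)))"
    and "k \<ge> 1"
  shows "(\<integral>s. bag_loss D f1 f2 h k s \<partial>(PiM {..<k} (\<lambda>_. D)))
           = (\<integral>w. f1 (h (fst w)) + of_bool (snd w) * f2 (h (fst w)) \<partial>D)
         \<and> (\<integral>\<^sup>+s. ennreal ((bag_loss D f1 f2 h k s
              - (\<integral>t. bag_loss D f1 f2 h k t \<partial>(PiM {..<k} (\<lambda>_. D))))\<^sup>2)
            \<partial>(PiM {..<k} (\<lambda>_. D)))
         \<le> ennreal (5/2) * (\<integral>\<^sup>+w. ennreal ((f2 (h (fst w)))\<^sup>2) \<partial>D)"
proof -
  note D = assms(1)
  interpret D: prob_space D by (rule D)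
  define M where "M = PiM {..<k} (\<lambda>_. D)"
  have PM: "prob_space M" unfolding M_def by (rule prob_space_PiM) (rule D)
  interpret M: prob_space M by (rule PM)
  define g :: "'a \<times> bool \<Rightarrow> real" where "g w = f2 (h (fst w))" for w
  define f :: "'a \<times> bool \<Rightarrow> real" where "f w = f1 (h (fst w))" for w
  define y :: "'a \<times> bool \<Rightarrow> real" where "y w = of_bool (snd w)" for w
  define p where "p = label_mean D"
  define \<mu> where "\<mu> = (\<integral>w. g w \<partial>D)"
  define a where "a w = y w - p" for w
  define b where "b w = g w - \<mu>" for w
  have gi: "integrable D g" unfolding g_def by (rule assms(6))
  have fi: "integrable D f" unfolding f_def by (rule assms(5))
  have gm: "g \<in> borel_measurable D" using gi by auto
  have ym: "y \<in> borel_measurable D"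
    unfolding y_def measurable_cong_sets[OF assms(2) refl] by measurable
  have y01: "0 \<le> y w \<and> y w \<le> 1" for w by (simp add: y_def)
  have yi: "integrable D y"
    by (rule Bochner_Integration.integrable_bound[of _ "\<lambda>_. 1::real"]) (auto simp: ym y01)
  have p_def': "p = (\<integral>w. y w \<partial>D)" unfolding p_def label_mean_def y_def ..
  have p01: "0 \<le> p" "p \<le> 1"
  proof -
    show "0 \<le> p" unfolding p_def' by (rule integral_nonneg_AE) (simp add: y01)
    have "(\<integral>w. y w \<partial>D) \<le> (\<integral>w. 1 \<partial>D)"
      by (rule integral_mono) (auto simp: yi y01)
    then show "p \<le> 1" unfolding p_def' by (simp add: D.prob_space)
  qed
  have am: "a \<in> borel_measurable D" unfolding a_def using ym by measurable
  have bm: "b \<in> borel_measurable D" unfolding b_def using gm by measurable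
  have abound: "\<bar>a w\<bar> \<le> 1" for w using y01[of w] p01 by (auto simp: a_def)
  have ai: "integrable D a" unfolding a_def using yi by auto
  have bi: "integrable D b" unfolding b_def using gi by auto
  have a0: "integral\<^sup>L D a = 0" unfolding a_def using yi by (simp add: p_def' D.prob_space)
  have b0: "integral\<^sup>L D b = 0" unfolding b_def using gi by (simp add: \<mu>_def D.prob_space)
  note S2 = sum2[OF D am bm abound bi a0 b0]
  note S4 = sum4[OF D am bm abound bi a0 b0]
  define C0 where "C0 = (\<integral>w. f w + p * g w \<partial>D)"
  define c where "c = (\<integral>w. a w * b w \<partial>D)"
  define Z where "Z s = (\<Sum>i<k. a (s i)) * (\<Sum>j<k. b (s j)) / real k" for s
  have kpos: "real k > 0" using assms(7) by simp
  have bl: "bag_loss D f1 f2 h k s = C0 + Z s" for s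
  proof -
    have 1: "bag_label k s - p = (\<Sum>i<k. a (s i)) / real k"
      unfolding bag_label_def a_def y_def using kpos
      by (simp add: sum_subtractf field_simps)
    have 2: "(\<Sum>i<k. f2 (h (fst (s i)))) - real k * (\<integral>w. f2 (h (fst w)) \<partial>D) = (\<Sum>j<k. b (s j))"
      unfolding b_def g_def \<mu>_def by (simp add: sum_subtractf)
    show ?thesis
      unfolding bag_loss_def Let_def p_def[symmetric] 1 2
      by (simp add: C0_def Z_def f_def g_def)
  qed
  have Zi: "integrable M Z" and intZ: "(\<integral>s. Z s \<partial>M) = c"
  proof -
    show "integrable M Z" unfolding Z_def M_def using S2(1)[of "{..<k}"] by simp
    have "(\<integral>s. Z s \<partial>M) = (\<integral>s. (\<Sum>i<k. a (s i)) * (\<Sum>j<k. b (s j)) \<partial>M) / real k"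
      unfolding Z_def by simp
    also have "\<dots> = c" unfolding M_def S2(2)[of "{..<k}", simplified] c_def using kpos by simp
    finally show "(\<integral>s. Z s \<partial>M) = c" .
  qed
  have intbl: "(\<integral>s. bag_loss D f1 f2 h k s \<partial>M) = C0 + c"
    unfolding bl using Zi intZ by (simp add: M.prob_space)
  have ygi: "integrable D (\<lambda>w. y w * g w)"
  proof (rule Bochner_Integration.integrable_bound[OF gi])
    show "(\<lambda>w. y w * g w) \<in> borel_measurable D" using ym gm by measurable
    show "AE w in D. norm (y w * g w) \<le> norm (g w)"
      using y01 by (auto simp: abs_mult intro!: mult_left_le_one_le)
  qed
  have c_eq: "c = (\<integral>w. y w * g w \<partial>D) - p * \<mu>"
  proof -
    have "c = (\<integral>w. (y w * g w - p * g w) - (\<mu> * y w - p * \<mu>) \<partial>D)"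
      unfolding c_def a_def b_def by (rule Bochner_Integration.integral_cong) (auto simp: algebra_simps)
    also have "\<dots> = (\<integral>w. y w * g w \<partial>D) - p * \<mu>"
      using ygi gi yi by (simp add: \<mu>_def p_def' D.prob_space)
    finally show ?thesis .
  qed
  have part1: "C0 + c = (\<integral>w. f1 (h (fst w)) + of_bool (snd w) * f2 (h (fst w)) \<partial>D)"
  proof -
    have "(\<integral>w. f1 (h (fst w)) + of_bool (snd w) * f2 (h (fst w)) \<partial>D) = (\<integral>w. f w + y w * g w \<partial>D)"
      by (simp add: f_def y_def g_def)
    also have "\<dots> = (\<integral>w. f w \<partial>D) + (\<integral>w. y w * g w \<partial>D)"
      using fi ygi by simp
    finally show ?thesis using fi gi by (simp add: C0_def c_eq \<mu>_def)
  qed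
  have part2: "(\<integral>\<^sup>+s. ennreal ((Z s - c)\<^sup>2) \<partial>M) \<le> ennreal (5/2) * (\<integral>\<^sup>+w. ennreal ((g w)\<^sup>2) \<partial>D)"
  proof (cases "(\<integral>\<^sup>+w. ennreal ((g w)\<^sup>2) \<partial>D) = \<infinity>")
    case True
    then show ?thesis by (simp add: ennreal_mult_top)
  next
    case False
    have g2i: "integrable D (\<lambda>w. (g w)\<^sup>2)"
    proof (rule integrableI_bounded)
      show "(\<lambda>w. (g w)\<^sup>2) \<in> borel_measurable D" using gm by measurable
      show "(\<integral>\<^sup>+w. ennreal (norm ((g w)\<^sup>2)) \<partial>D) < \<infinity>"
        using False by (simp add: top.not_eq_extremum)
    qed
    define G where "G = (\<integral>w. (g w)\<^sup>2 \<partial>D)"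
    have G0: "0 \<le> G" unfolding G_def by simp
    have nnG: "(\<integral>\<^sup>+w. ennreal ((g w)\<^sup>2) \<partial>D) = ennreal G"
      unfolding G_def by (rule nn_integral_eq_integral[OF g2i]) simp
    have b2i: "integrable D (\<lambda>w. (b w)\<^sup>2)"
      unfolding b_def power2_diff using g2i gi by simp
    have bbi: "integrable D (\<lambda>w. b w * b w)"
      using b2i by (simp add: power2_eq_square)
    have aa1: "\<bar>a w * a w\<bar> \<le> 1" for w
    proof -
      have "\<bar>a w\<bar> * \<bar>a w\<bar> \<le> 1" using abound[of w] by (intro mult_le_one) auto
      then show ?thesis by (simp only: abs_mult)
    qed
    have aai: "integrable D (\<lambda>w. a w * a w)"
    proof (rule Bochner_Integration.integrable_bound[of _ "\<lambda>_. 1::real"])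
      show "(\<lambda>w. a w * a w) \<in> borel_measurable D" using am by measurable
      show "AE w in D. norm (a w * a w) \<le> norm (1::real)"
        using aa1 by simp
    qed simp
    have abi: "integrable D (\<lambda>w. a w * b w)"
    proof (rule Bochner_Integration.integrable_bound[OF bi])
      show "(\<lambda>w. a w * b w) \<in> borel_measurable D" using am bm by measurable
      show "AE w in D. norm (a w * b w) \<le> norm (b w)"
        using abound by (auto simp: abs_mult intro!: mult_left_le_one_le)
    qed
    have aabbi: "integrable D (\<lambda>w. a w * a w * b w * b w)"
    proof (rule Bochner_Integration.integrable_bound[OF bbi])
      show "(\<lambda>w. a w * a w * b w * b w) \<in> borel_measurable D" using am bm by measurable
      show "AE w in D. norm (a w * a w * b w * b w) \<le> norm (b w * b w)"
      proof (rule AE_I2)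
        fix w
        have "\<bar>a w * a w\<bar> \<le> 1" by (rule aa1)
        then have "\<bar>a w * a w\<bar> * \<bar>b w * b w\<bar> \<le> 1 * \<bar>b w * b w\<bar>"
          by (intro mult_right_mono) auto
        then show "norm (a w * a w * b w * b w) \<le> norm (b w * b w)"
          by (simp add: abs_mult mult.assoc)
      qed
    qed
    define m22 where "m22 = (\<integral>w. a w * a w * b w * b w \<partial>D)"
    define va where "va = (\<integral>w. a w * a w \<partial>D)"
    define vb where "vb = (\<integral>w. b w * b w \<partial>D)"
    have m22_0: "0 \<le> m22" unfolding m22_def
    proof (rule integral_nonneg_AE, rule AE_I2)
      fix w
      have "a w * a w * b w * b w = (a w * b w) * (a w * b w)" by (simp add: algebra_simps)
      moreover have "0 \<le> (a w * b w) * (a w * b w)" by (rule zero_le_square)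
      ultimately show "0 \<le> a w * a w * b w * b w" by (simp only:)
    qed
    have m22_vb: "m22 \<le> vb" unfolding m22_def vb_def
    proof (rule integral_mono[OF aabbi bbi])
      fix w
      have "a w * a w \<le> 1" using aa1[of w] by (simp add: abs_le_iff)
      then have "(a w * a w) * (b w * b w) \<le> 1 * (b w * b w)"
        by (intro mult_right_mono) auto
      then show "a w * a w * b w * b w \<le> b w * b w" by (simp add: mult.assoc)
    qed
    have va_eq: "va = p - p * p"
    proof -
      have yy: "y w * y w = y w" for w by (simp add: y_def)
      have "va = (\<integral>w. y w - 2 * p * y w + p * p \<partial>D)"
        unfolding va_def a_def by (rule Bochner_Integration.integral_cong) (auto simp: algebra_simps yy)
      also have "\<dots> = p - p * p"
        using yi by (simp add: p_def'[symmetric] D.prob_space)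
      finally show ?thesis .
    qed
    have va_le: "va \<le> 1/4"
    proof -
      have "0 \<le> (p - 1/2)\<^sup>2" by simp
      then show ?thesis unfolding va_eq by (simp add: power2_eq_square algebra_simps)
    qed
    have va0: "0 \<le> va" unfolding va_def by (rule integral_nonneg_AE) simp
    have vb0: "0 \<le> vb" unfolding vb_def by (rule integral_nonneg_AE) simp
    have vb_G: "vb \<le> G"
    proof -
      have "vb = (\<integral>w. (g w)\<^sup>2 - 2 * \<mu> * g w + \<mu> * \<mu> \<partial>D)"
        unfolding vb_def b_def by (rule Bochner_Integration.integral_cong) (auto simp: algebra_simps power2_eq_square)
      also have "\<dots> = G - \<mu> * \<mu>"
        using g2i gi by (simp add: G_def \<mu>_def[symmetric] D.prob_space)
      finally show ?thesis by simp
    qed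
    have cc: "c * c \<le> m22"
    proof -
      have "0 \<le> (\<integral>w. (a w * b w - c)\<^sup>2 \<partial>D)" by (rule integral_nonneg_AE) simp
      also have "(\<integral>w. (a w * b w - c)\<^sup>2 \<partial>D) = (\<integral>w. a w * a w * b w * b w - 2 * c * (a w * b w) + c * c \<partial>D)"
        by (rule Bochner_Integration.integral_cong) (auto simp: algebra_simps power2_eq_square)
      also have "\<dots> = m22 - c * c"
        using aabbi abi by (simp add: m22_def c_def[symmetric] D.prob_space)
      finally show ?thesis by simp
    qed
    define Q where "Q s = (\<Sum>i<k. a (s i))\<^sup>2 * (\<Sum>j<k. b (s j))\<^sup>2" for s
    have Qi: "integrable M Q" unfolding Q_def M_def using S4(1)[OF b2i, of "{..<k}"] by simp
    have intQ: "(\<integral>s. Q s \<partial>M) = real k * m22 + real k * (real k - 1) * (va * vb + 2 * (c * c))"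
      unfolding Q_def M_def m22_def va_def vb_def c_def using S4(2)[OF b2i, of "{..<k}"] by simp
    have Zsq: "(Z s - c)\<^sup>2 = Q s / (real k)\<^sup>2 - 2 * c * Z s + c * c" for s
      unfolding Z_def Q_def using kpos by (simp add: power2_eq_square field_simps)
    have Zci: "integrable M (\<lambda>s. (Z s - c)\<^sup>2)"
      unfolding Zsq using Qi Zi by simp
    have intZc: "(\<integral>s. (Z s - c)\<^sup>2 \<partial>M) = (\<integral>s. Q s \<partial>M) / (real k)\<^sup>2 - c * c"
      unfolding Zsq using Qi Zi intZ by (simp add: M.prob_space)
    have nnZ: "(\<integral>\<^sup>+s. ennreal ((Z s - c)\<^sup>2) \<partial>M) = ennreal ((\<integral>s. Q s \<partial>M) / (real k)\<^sup>2 - c * c)"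
      unfolding intZc[symmetric] by (rule nn_integral_eq_integral[OF Zci]) simp
    define K where "K = real k"
    have K1: "1 \<le> K" unfolding K_def using assms(7) by simp
    have real_ineq: "(\<integral>s. Q s \<partial>M) / (real k)\<^sup>2 - c * c \<le> 5/2 * G"
    proof -
      have t1: "K * m22 \<le> K * K * G"
      proof -
        have "K * m22 \<le> K * G" using m22_vb vb_G K1 by (intro mult_left_mono) auto
        also have "\<dots> \<le> (K * K) * G" using K1 G0 by (intro mult_right_mono) (auto simp: mult_le_cancel_left1)
        finally show ?thesis .
      qed
      have t2: "K * (K - 1) * (va * vb) \<le> K * K * (1/4 * G)"
      proof (rule mult_mono)
        show "K * (K - 1) \<le> K * K" using K1 by (simp add: algebra_simps)
        show "va * vb \<le> 1/4 * G" using va_le va0 vb0 vb_G by (intro mult_mono) auto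
      qed (use K1 va0 vb0 in auto)
      have t3: "(K * K - 2 * K) * (c * c) \<le> K * K * G"
      proof (rule mult_mono)
        show "K * K - 2 * K \<le> K * K" using K1 by simp
        show "c * c \<le> G" using cc m22_vb vb_G by simp
      qed (use K1 in auto)
      have GG: "0 \<le> K * K * G" using K1 G0 by simp
      have e1: "K * m22 + K * (K - 1) * (va * vb + 2 * (c * c)) = K * m22 + K * (K - 1) * (va * vb) + (K * K - 2 * K) * (c * c) + K * K * (c * c)"
        by (simp add: algebra_simps)
      have e2: "(K * K) * (5/2 * G + c * c) = 5/2 * (K * K * G) + K * K * (c * c)"
        by (simp add: algebra_simps)
      have e3: "K * K * (1/4 * G) = 1/4 * (K * K * G)" by simp
      have "K * m22 + K * (K - 1) * (va * vb + 2 * (c * c)) \<le> (K * K) * (5/2 * G + c * c)"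
        unfolding e1 e2 using t1 t2 t3 GG unfolding e3 by linarith
      then have "(K * m22 + K * (K - 1) * (va * vb + 2 * (c * c))) / (K * K) \<le> 5/2 * G + c * c"
        using K1 by (simp add: divide_le_eq mult.commute)
      moreover have "(\<integral>s. Q s \<partial>M) / (real k)\<^sup>2 = (K * m22 + K * (K - 1) * (va * vb + 2 * (c * c))) / (K * K)"
        unfolding intQ K_def by (simp add: power2_eq_square)
      ultimately show ?thesis by linarith
    qed
    have "ennreal ((\<integral>s. Q s \<partial>M) / (real k)\<^sup>2 - c * c) \<le> ennreal (5/2 * G)"
      using real_ineq by (rule ennreal_leI)
    also have "\<dots> = ennreal (5/2) * ennreal G" by (rule ennreal_mult) (simp_all add: G0)
    finally show ?thesis unfolding nnZ nnG .
  qed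
  have eqf: "(\<lambda>s. ennreal ((bag_loss D f1 f2 h k s - (\<integral>t. bag_loss D f1 f2 h k t \<partial>M))\<^sup>2))
      = (\<lambda>s. ennreal ((Z s - c)\<^sup>2))"
    using intbl unfolding bl by simp
  show ?thesis
    unfolding M_def[symmetric] eqf
    using intbl part1 part2 unfolding g_def by simp
qed
end
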